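(* Let $n\ge 2$, $\mathcal{O}\in\mathcal{C}_c^{(n)}$, $\nu\in(0,1]$, and $\mathcal{J}\in\mathbf{J}_{\mathcal{O}}^{\nu}$. Then there is a constant $\mu_{n,\nu}$ depending only on $n$ and $\nu$ such that $\|\mathcal{J}\|_2\le\mu_{n,\nu}$, $0\le\mu_{n,\nu}<1$.
   Context: $\imath=\sqrt{-1}$. For $1\le i<j\le n$ and real $\phi,\alpha$, $R(i,j,\phi,\alpha)$ is the $n\times n$ matrix equal to $I_n$ except for entries $(i,i)=(j,j)=\cos\phi$, $(i,j)=-e^{\imath\alpha}\sin\phi$, $(j,i)=e^{-\imath\alpha}\sin\phi$. Let $N=n(n-1)/2$. For $A=(a_{st})\in\mathbb{C}^{n\times n}$ let $c_t=(a_{1t},\dots,a_{t-1,t})^T$, $r_s=(a_{s1},\dots,a_{s,s-1})$ ($2\le s,t\le n$) and $\mathrm{ve}(A)=[c_2^T,\dots,c_n^T,r_2,\dots,r_n]^T\in\mathbb{C}^{2N}$. Let $\nu_{ij}$ be the linear map on $\mathbb{C}^{n\times n}$ setting entries $(i,j),(j,i)$ to zero. For $U=R(i,j,\phi,\alpha)$ the Jacobi annihilator $\mathcal{R}_{ij}(U)$ is the $2N\times 2N$ matrix with $\mathcal{R}_{ij}(U)\mathrm{ve}(A)=\mathrm{ve}(\nu_{ij}(U^*AU))$ for all $A$. For $\nu\in[0,1]$, $\mathbf{R}_{ij}^{\nu}=\{\mathcal{R}_{ij}(U): U=R(i,j,\phi,\alpha),\ |\cos\phi|\ge\nu\}$.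 Let $\mathcal{P}_n=\{(r,s):1\le r<s\le n\}$. For an ordering $\mathcal{O}=(i_0,j_0),\dots,(i_{N-1},j_{N-1})$ of $\mathcal{P}_n$ (each pair exactly once), the class of Jacobi operators is $\mathbf{J}_{\mathcal{O}}^{\nu}=\{\mathcal{R}_{i_{N-1}j_{N-1}}\cdots\mathcal{R}_{i_1j_1}\mathcal{R}_{i_0j_0}: \mathcal{R}_{i_kj_k}\in\mathbf{R}_{i_kj_k}^{\nu},\ 0\le k\le N-1\}$. $\|\cdot\|_2$ is the spectral norm. $\mathcal{C}_c^{(n)}$ is the set of orderings of the form $(1,2),(\tau_3(1),3),(\tau_3(2),3),\dots,(\tau_n(1),n),\dots,(\tau_n(n-1),n)$, each $\tau_j$ a permutation of $\{1,\dots,j-1\}$, $3\le j\le n$. *)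

theory Defs
  imports Complex_Main "Jordan_Normal_Form.Schur_Decomposition"
begin

text \<open>Indices of pairs (i,j) are 1-based as in the paper; matrix entry (s,t) of the paper
  is entry (s-1,t-1) of a JNF matrix.\<close>

definition Nn :: "nat \<Rightarrow> nat" where "Nn n = n * (n - 1) div 2"

definition rot :: "nat \<Rightarrow> nat \<Rightarrow> nat \<Rightarrow> real \<Rightarrow> real \<Rightarrow> complex mat" where
  "rot n i j \<phi> \<alpha> = mat n n (\<lambda>(p,q).
     if p = q then (if p = i - 1 \<or> p = j - 1 then complex_of_real (cos \<phi>) else 1)
     else if p = i - 1 \<and> q = j - 1 then - exp (\<i> * complex_of_real \<alpha>) * complex_of_real (sin \<phi>)
     else if p = j - 1 \<and> q = i - 1 then exp (- \<i> * complex_of_real \<alpha>) * complex_of_real (sin \<phi>)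
     else 0)"

definition ve :: "nat \<Rightarrow> complex mat \<Rightarrow> complex vec" where
  "ve n A = vec_of_list
     (concat (map (\<lambda>t. map (\<lambda>s. A $$ (s - 1, t - 1)) [1..<t]) [2..<n+1]) @
      concat (map (\<lambda>s. map (\<lambda>t. A $$ (s - 1, t - 1)) [1..<s]) [2..<n+1]))"

definition nu :: "nat \<Rightarrow> nat \<Rightarrow> nat \<Rightarrow> complex mat \<Rightarrow> complex mat" where
  "nu n i j A = mat n n (\<lambda>(p,q).
     if (p = i - 1 \<and> q = j - 1) \<or> (p = j - 1 \<and> q = i - 1) then 0 else A $$ (p,q))"

definition is_annihilator :: "nat \<Rightarrow> nat \<Rightarrow> nat \<Rightarrow> complex mat \<Rightarrow> complex mat \<Rightarrow> bool" where
  "is_annihilator n i j U R \<longleftrightarrow>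
     R \<in> carrier_mat (2 * Nn n) (2 * Nn n) \<and>
     (\<forall>A \<in> carrier_mat n n. R *\<^sub>v ve n A = ve n (nu n i j (mat_adjoint U * A * U)))"

definition ann_set :: "nat \<Rightarrow> real \<Rightarrow> nat \<times> nat \<Rightarrow> complex mat set" where
  "ann_set n \<nu> ij = {R. \<exists>\<phi> \<alpha>. \<bar>cos \<phi>\<bar> \<ge> \<nu> \<and>
      is_annihilator n (fst ij) (snd ij) (rot n (fst ij) (snd ij) \<phi> \<alpha>) R}"

text \<open>Class of Jacobi operators J_O^nu for an ordering O = [(i_0,j_0),...,(i_{N-1},j_{N-1})]:
  products R_{N-1} ... R_1 R_0.\<close>
fun jacobi_class :: "nat \<Rightarrow> real \<Rightarrow> (nat \<times> nat) list \<Rightarrow> complex mat set" where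
  "jacobi_class n \<nu> [] = {1\<^sub>m (2 * Nn n)}"
| "jacobi_class n \<nu> (p # ps) = {J * R | J R. J \<in> jacobi_class n \<nu> ps \<and> R \<in> ann_set n \<nu> p}"

definition Cc :: "nat \<Rightarrow> (nat \<times> nat) list set" where
  "Cc n = {ord. \<exists>\<tau> :: nat \<Rightarrow> nat \<Rightarrow> nat.
      (\<forall>j \<in> {2..n}. bij_betw (\<tau> j) {1..<j} {1..<j}) \<and>
      ord = concat (map (\<lambda>j. map (\<lambda>k. (\<tau> j k, j)) [1..<j]) [2..<n+1])}"

definition vnorm2 :: "complex vec \<Rightarrow> real" where
  "vnorm2 x = sqrt (\<Sum>i<dim_vec x. (cmod (x $ i))\<^sup>2)"

definition spec_norm :: "complex mat \<Rightarrow> real" where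
  "spec_norm M = Sup {vnorm2 (M *\<^sub>v x) | x. x \<in> carrier_vec (dim_col M) \<and> vnorm2 x \<le> 1}"

end

theory Submission
  imports Defs
begin


definition rotU :: "nat \<Rightarrow> nat \<times> nat \<Rightarrow> real \<times> real \<Rightarrow> complex mat" where
  "rotU n ij pa = rot n (fst ij) (snd ij) (fst pa) (snd pa)"

definition step :: "nat \<Rightarrow> nat \<times> nat \<Rightarrow> real \<times> real \<Rightarrow> complex mat \<Rightarrow> complex mat" where
  "step n ij pa A = nu n (fst ij) (snd ij) (mat_adjoint (rotU n ij pa) * A * rotU n ij pa)"

lemma rot_carrier: "rot n i j \<phi> \<alpha> \<in> carrier_mat n n"
  unfolding rot_def by auto

lemma rot_col_out:
  assumes "k < n" "t < n" "t \<noteq> i - 1" "t \<noteq> j - 1"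
  shows "rot n i j \<phi> \<alpha> $$ (k,t) = (if k = t then 1 else 0)"
  using assms unfolding rot_def by auto

lemma rot_row_out:
  assumes "k < n" "t < n" "k \<noteq> i - 1" "k \<noteq> j - 1"
  shows "rot n i j \<phi> \<alpha> $$ (k,t) = (if k = t then 1 else 0)"
  using assms unfolding rot_def by auto

lemma mult_rot_out:
  assumes M: "M \<in> carrier_mat m n" and "s < m" "t < n" "t \<noteq> i - 1" "t \<noteq> j - 1"
  shows "(M * rot n i j \<phi> \<alpha>) $$ (s,t) = M $$ (s,t)"
proof -
  have "(M * rot n i j \<phi> \<alpha>) $$ (s,t) = (\<Sum>k\<in>{0..<n}. M $$ (s,k) * rot n i j \<phi> \<alpha> $$ (k,t))"
    using assms rot_carrier[of n i j \<phi> \<alpha>] by (simp add: scalar_prod_def)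
  also have "\<dots> = (\<Sum>k\<in>{0..<n}. if k = t then M $$ (s,k) else 0)"
    by (rule sum.cong) (use assms in \<open>auto simp: rot_col_out\<close>)
  also have "\<dots> = M $$ (s,t)" using assms by simp
  finally show ?thesis .
qed

lemma mult_rot_in:
  assumes M: "M \<in> carrier_mat m n" and "s < m" "t < n" "i - 1 < n" "j - 1 < n" "i - 1 \<noteq> j - 1"
    "t = i - 1 \<or> t = j - 1"
  shows "(M * rot n i j \<phi> \<alpha>) $$ (s,t) = M $$ (s,i-1) * rot n i j \<phi> \<alpha> $$ (i-1,t)
     + M $$ (s,j-1) * rot n i j \<phi> \<alpha> $$ (j-1,t)"
proof -
  let ?U = "rot n i j \<phi> \<alpha>"
  have "(M * ?U) $$ (s,t) = (\<Sum>k\<in>{0..<n}. M $$ (s,k) * ?U $$ (k,t))"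
    using assms rot_carrier[of n i j \<phi> \<alpha>] by (simp add: scalar_prod_def)
  also have "\<dots> = (\<Sum>k\<in>{i-1,j-1}. M $$ (s,k) * ?U $$ (k,t))"
    by (rule sum.mono_neutral_right) (use assms in \<open>auto simp: rot_def\<close>)
  also have "\<dots> = M $$ (s,i-1) * ?U $$ (i-1,t) + M $$ (s,j-1) * ?U $$ (j-1,t)"
    using assms by simp
  finally show ?thesis .
qed

lemma adj_rot_index: "k < n \<Longrightarrow> s < n \<Longrightarrow> mat_adjoint (rot n i j \<phi> \<alpha>) $$ (s,k) = cnj (rot n i j \<phi> \<alpha> $$ (k,s))"
  unfolding mat_adjoint_def using rot_carrier[of n i j \<phi> \<alpha>]
  by (simp add: mat_of_rows_def)

lemma adj_rot_carrier: "mat_adjoint (rot n i j \<phi> \<alpha>) \<in> carrier_mat n n"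
  unfolding mat_adjoint_def using rot_carrier[of n i j \<phi> \<alpha>] by (simp add: mat_of_rows_def)

lemma adj_mult_out:
  assumes M: "M \<in> carrier_mat n m" and "s < n" "t < m" "s \<noteq> i - 1" "s \<noteq> j - 1"
  shows "(mat_adjoint (rot n i j \<phi> \<alpha>) * M) $$ (s,t) = M $$ (s,t)"
proof -
  let ?U = "rot n i j \<phi> \<alpha>"
  have "(mat_adjoint ?U * M) $$ (s,t) = (\<Sum>k\<in>{0..<n}. cnj (?U $$ (k,s)) * M $$ (k,t))"
    using assms adj_rot_carrier[of n i j \<phi> \<alpha>] by (simp add: scalar_prod_def adj_rot_index)
  also have "\<dots> = (\<Sum>k\<in>{0..<n}. if k = s then M $$ (k,t) else 0)"
    by (rule sum.cong) (use assms in \<open>auto simp: rot_col_out\<close>)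
  also have "\<dots> = M $$ (s,t)" using assms by simp
  finally show ?thesis .
qed

lemma adj_mult_in:
  assumes M: "M \<in> carrier_mat n m" and "s < n" "t < m" "i - 1 < n" "j - 1 < n" "i - 1 \<noteq> j - 1"
    "s = i - 1 \<or> s = j - 1"
  shows "(mat_adjoint (rot n i j \<phi> \<alpha>) * M) $$ (s,t) = cnj (rot n i j \<phi> \<alpha> $$ (i-1,s)) * M $$ (i-1,t)
     + cnj (rot n i j \<phi> \<alpha> $$ (j-1,s)) * M $$ (j-1,t)"
proof -
  let ?U = "rot n i j \<phi> \<alpha>"
  have "(mat_adjoint ?U * M) $$ (s,t) = (\<Sum>k\<in>{0..<n}. cnj (?U $$ (k,s)) * M $$ (k,t))"
    using assms adj_rot_carrier[of n i j \<phi> \<alpha>] by (simp add: scalar_prod_def adj_rot_index)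
  also have "\<dots> = (\<Sum>k\<in>{i-1,j-1}. cnj (?U $$ (k,s)) * M $$ (k,t))"
    by (rule sum.mono_neutral_right) (use assms in \<open>auto simp: rot_def\<close>)
  also have "\<dots> = cnj (?U $$ (i-1,s)) * M $$ (i-1,t) + cnj (?U $$ (j-1,s)) * M $$ (j-1,t)"
    using assms by simp
  finally show ?thesis .
qed


lemma rot_ii: "i - 1 < n \<Longrightarrow> rot n i j \<phi> \<alpha> $$ (i-1,i-1) = complex_of_real (cos \<phi>)"
  unfolding rot_def by simp
lemma rot_jj: "j - 1 < n \<Longrightarrow> rot n i j \<phi> \<alpha> $$ (j-1,j-1) = complex_of_real (cos \<phi>)"
  unfolding rot_def by simp
lemma rot_ij: "i - 1 < n \<Longrightarrow> j - 1 < n \<Longrightarrow> i - 1 \<noteq> j - 1 \<Longrightarrow>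
  rot n i j \<phi> \<alpha> $$ (i-1,j-1) = - exp (\<i> * complex_of_real \<alpha>) * complex_of_real (sin \<phi>)"
  unfolding rot_def by simp
lemma rot_ji: "i - 1 < n \<Longrightarrow> j - 1 < n \<Longrightarrow> i - 1 \<noteq> j - 1 \<Longrightarrow>
  rot n i j \<phi> \<alpha> $$ (j-1,i-1) = exp (- \<i> * complex_of_real \<alpha>) * complex_of_real (sin \<phi>)"
  unfolding rot_def by simp

locale piv =
  fixes n i j :: nat
  assumes i1: "1 \<le> i" and ij: "i < j" and jn: "j \<le> n"
begin
lemma i'n: "i - 1 < n" and j'n: "j - 1 < n" and i'j': "i - 1 \<noteq> j - 1" and i'j'l: "i - 1 < j - 1"
  using i1 ij jn by auto
end

context piv begin

lemma step_entry:
  fixes \<phi> \<alpha> :: real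
  assumes A: "A \<in> carrier_mat n n" and s: "s < n" and t: "t < n"
  defines "U \<equiv> rot n i j \<phi> \<alpha>"
  shows "step n (i,j) (\<phi>,\<alpha>) A $$ (s,t) =
    (if (s = i - 1 \<and> t = j - 1) \<or> (s = j - 1 \<and> t = i - 1) then 0
     else if (s = i - 1 \<or> s = j - 1) \<and> t \<noteq> i - 1 \<and> t \<noteq> j - 1 then
        cnj (U $$ (i-1,s)) * A $$ (i-1,t) + cnj (U $$ (j-1,s)) * A $$ (j-1,t)
     else if (t = i - 1 \<or> t = j - 1) \<and> s \<noteq> i - 1 \<and> s \<noteq> j - 1 then
        A $$ (s,i-1) * U $$ (i-1,t) + A $$ (s,j-1) * U $$ (j-1,t)
     else if s \<noteq> i - 1 \<and> s \<noteq> j - 1 \<and> t \<noteq> i - 1 \<and> t \<noteq> j - 1 then A $$ (s,t)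
     else (mat_adjoint U * A * U) $$ (s,t))"
proof -
  have UA: "mat_adjoint U * A \<in> carrier_mat n n" using A adj_rot_carrier[of n i j \<phi> \<alpha>] unfolding U_def by (metis mult_carrier_mat)
  have st: "step n (i,j) (\<phi>,\<alpha>) A $$ (s,t) = (if (s = i - 1 \<and> t = j - 1) \<or> (s = j - 1 \<and> t = i - 1) then 0
     else (mat_adjoint U * A * U) $$ (s,t))"
    unfolding step_def nu_def rotU_def U_def using s t by auto
  show ?thesis
    unfolding st
    using s t i'n j'n i'j'
    using mult_rot_out[OF UA s t, of i j \<phi> \<alpha>] mult_rot_in[OF UA s t, of i j \<phi> \<alpha>]
      adj_mult_out[OF A s t, of i j \<phi> \<alpha>] adj_mult_in[OF A s t, of i j \<phi> \<alpha>]
      adj_mult_out[OF A s i'n, of i j \<phi> \<alpha>] adj_mult_out[OF A s j'n, of i j \<phi> \<alpha>]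
    unfolding U_def by auto
qed

end


lemma unit1:
  fixes a b w :: complex and c s :: real
  assumes "cmod w = 1" "c\<^sup>2 + s\<^sup>2 = 1"
  shows "(cmod (c * a + w * s * b))\<^sup>2 + (cmod (- cnj w * s * a + c * b))\<^sup>2 = (cmod a)\<^sup>2 + (cmod b)\<^sup>2"
proof -
  have w: "(Re w)\<^sup>2 + (Im w)\<^sup>2 = 1" using assms(1) by (metis cmod_power2 power_one)
  have e: "\<And>x y :: real. x = (c\<^sup>2 + s\<^sup>2 * ((Re w)\<^sup>2 + (Im w)\<^sup>2)) * y \<Longrightarrow> x = y"
    using w assms(2) by simp
  show ?thesis unfolding cmod_power2 by (rule e) (simp add: power2_eq_square algebra_simps)
qed

lemma unit2:
  fixes a b w :: complex and c s :: real
  assumes "cmod w = 1" "c\<^sup>2 + s\<^sup>2 = 1"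
  shows "(cmod (a * c + b * (cnj w * s)))\<^sup>2 + (cmod (a * (- w * s) + b * c))\<^sup>2 = (cmod a)\<^sup>2 + (cmod b)\<^sup>2"
proof -
  have w: "(Re w)\<^sup>2 + (Im w)\<^sup>2 = 1" using assms(1) by (metis cmod_power2 power_one)
  have e: "\<And>x y :: real. x = (c\<^sup>2 + s\<^sup>2 * ((Re w)\<^sup>2 + (Im w)\<^sup>2)) * y \<Longrightarrow> x = y"
    using w assms(2) by simp
  show ?thesis unfolding cmod_power2 by (rule e) (simp add: power2_eq_square algebra_simps)
qed


definition ww :: "real \<Rightarrow> complex" where "ww \<alpha> = exp (\<i> * complex_of_real \<alpha>)"

lemma ww_cis: "ww \<alpha> = cis \<alpha>" unfolding ww_def by (simp add: cis_conv_exp)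
lemma ww_norm: "cmod (ww \<alpha>) = 1" unfolding ww_cis by simp
lemma ww_cnj: "exp (- \<i> * complex_of_real \<alpha>) = cnj (ww \<alpha>)"
  unfolding ww_cis cis_cnj by (simp add: cis_conv_exp)

context piv begin

lemma rotU_entries:
  "rot n i j \<phi> \<alpha> $$ (i-1,i-1) = complex_of_real (cos \<phi>)"
  "rot n i j \<phi> \<alpha> $$ (j-1,j-1) = complex_of_real (cos \<phi>)"
  "rot n i j \<phi> \<alpha> $$ (i-1,j-1) = - ww \<alpha> * complex_of_real (sin \<phi>)"
  "rot n i j \<phi> \<alpha> $$ (j-1,i-1) = cnj (ww \<alpha>) * complex_of_real (sin \<phi>)"
  using rot_ii[OF i'n] rot_jj[OF j'n] rot_ij[OF i'n j'n i'j'] rot_ji[OF i'n j'n i'j'] ww_cnj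
  unfolding ww_def by auto

lemma step_out:
  assumes "A \<in> carrier_mat n n" "s < n" "t < n" "s \<noteq> i - 1" "s \<noteq> j - 1" "t \<noteq> i - 1" "t \<noteq> j - 1"
  shows "step n (i,j) (\<phi>,\<alpha>) A $$ (s,t) = A $$ (s,t)"
  using step_entry[OF assms(1-3), of \<phi> \<alpha>] assms by auto

lemma step_piv:
  assumes "A \<in> carrier_mat n n"
  shows "step n (i,j) (\<phi>,\<alpha>) A $$ (i-1,j-1) = 0" "step n (i,j) (\<phi>,\<alpha>) A $$ (j-1,i-1) = 0"
  using step_entry[OF assms i'n j'n, of \<phi> \<alpha>] step_entry[OF assms j'n i'n, of \<phi> \<alpha>] by auto

lemma step_row_i:
  assumes "A \<in> carrier_mat n n" "t < n" "t \<noteq> i - 1" "t \<noteq> j - 1"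
  shows "step n (i,j) (\<phi>,\<alpha>) A $$ (i-1,t) = complex_of_real (cos \<phi>) * A $$ (i-1,t) + ww \<alpha> * complex_of_real (sin \<phi>) * A $$ (j-1,t)"
  using step_entry[OF assms(1) i'n assms(2), of \<phi> \<alpha>] assms i'j' rotU_entries by auto

lemma step_row_j:
  assumes "A \<in> carrier_mat n n" "t < n" "t \<noteq> i - 1" "t \<noteq> j - 1"
  shows "step n (i,j) (\<phi>,\<alpha>) A $$ (j-1,t) = - cnj (ww \<alpha>) * complex_of_real (sin \<phi>) * A $$ (i-1,t) + complex_of_real (cos \<phi>) * A $$ (j-1,t)"
  using step_entry[OF assms(1) j'n assms(2), of \<phi> \<alpha>] assms i'j' rotU_entries by auto

lemma step_col_i:
  assumes "A \<in> carrier_mat n n" "s < n" "s \<noteq> i - 1" "s \<noteq> j - 1"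
  shows "step n (i,j) (\<phi>,\<alpha>) A $$ (s,i-1) = A $$ (s,i-1) * complex_of_real (cos \<phi>) + A $$ (s,j-1) * (cnj (ww \<alpha>) * complex_of_real (sin \<phi>))"
  using step_entry[OF assms(1) assms(2) i'n, of \<phi> \<alpha>] assms i'j' rotU_entries by auto

lemma step_col_j:
  assumes "A \<in> carrier_mat n n" "s < n" "s \<noteq> i - 1" "s \<noteq> j - 1"
  shows "step n (i,j) (\<phi>,\<alpha>) A $$ (s,j-1) = A $$ (s,i-1) * (- ww \<alpha> * complex_of_real (sin \<phi>)) + A $$ (s,j-1) * complex_of_real (cos \<phi>)"
  using step_entry[OF assms(1) assms(2) j'n, of \<phi> \<alpha>] assms i'j' rotU_entries by auto

end


definition offS :: "nat \<Rightarrow> (nat \<times> nat) set" where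
  "offS n = {(s,t). s < n \<and> t < n \<and> s \<noteq> t}"

definition off :: "nat \<Rightarrow> complex mat \<Rightarrow> real" where
  "off n A = (\<Sum>p\<in>offS n. (cmod (A $$ p))\<^sup>2)"

lemma finite_offS: "finite (offS n)"
  by (rule finite_subset[of _ "{..<n} \<times> {..<n}"]) (auto simp: offS_def)

lemma split_off_gen:
  fixes h :: "nat \<times> nat \<Rightarrow> real" and a b n :: nat
  assumes ab: "a < n" "b < n" "a \<noteq> b"
  defines "T \<equiv> {t. t < n \<and> t \<noteq> a \<and> t \<noteq> b}"
  shows "(\<Sum>p\<in>offS n. h p) = (\<Sum>p\<in>{(s,t)\<in>offS n. s \<in> T \<and> t \<in> T}. h p)
     + (\<Sum>t\<in>T. h (a,t) + h (b,t)) + (\<Sum>s\<in>T. h (s,a) + h (s,b))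
     + (h (a,b) + h (b,a))"
proof -
  let ?P = "{a, b}"
  let ?O1 = "{(s,t)\<in>offS n. s \<in> T \<and> t \<in> T}"
  have fT: "finite T" unfolding T_def by (rule finite_subset[of _ "{..<n}"]) auto
  have eq: "offS n = ?O1 \<union> (?P \<times> T) \<union> (T \<times> ?P) \<union> {(a,b),(b,a)}"
proof (intro equalityI subsetI)
    fix p assume "p \<in> offS n"
    then obtain s t where p: "p = (s,t)" "s < n" "t < n" "s \<noteq> t" by (auto simp: offS_def)
    show "p \<in> {(s,t)\<in>offS n. s \<in> T \<and> t \<in> T} \<union> ({a,b} \<times> T) \<union> (T \<times> {a,b}) \<union> {(a,b),(b,a)}"
    proof (cases "s \<in> T")
      case True
      then show ?thesis using p unfolding T_def offS_def by auto
    next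
      case False
      then have "s = a \<or> s = b" using p unfolding T_def by auto
      then show ?thesis using p unfolding T_def offS_def by auto
    qed
  next
    fix p assume "p \<in> ?O1 \<union> (?P \<times> T) \<union> (T \<times> ?P) \<union> {(a,b),(b,a)}"
    then show "p \<in> offS n" using ab unfolding T_def offS_def by auto
  qed
  have f1: "finite ?O1" by (rule finite_subset[OF _ finite_offS]) auto
  have d1: "?O1 \<inter> (?P \<times> T) = {}" "(?O1 \<union> (?P \<times> T)) \<inter> (T \<times> ?P) = {}"
      "(?O1 \<union> (?P \<times> T) \<union> (T \<times> ?P)) \<inter> {(a,b),(b,a)} = {}"
      unfolding T_def by auto
  have fs: "finite (?P \<times> T)" "finite (T \<times> ?P)" using fT by auto
  have S: "(\<Sum>p\<in>offS n. h p) = (\<Sum>p\<in>?O1. h p) + (\<Sum>p\<in>?P \<times> T. h p) + (\<Sum>p\<in>T \<times> ?P. h p)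
      + (\<Sum>p\<in>{(a,b),(b,a)}. h p)"
    unfolding arg_cong[where f="\<lambda>X. \<Sum>p\<in>X. h p", OF eq]
    by (simp only: sum.union_disjoint[OF _ _ d1(3)] sum.union_disjoint[OF _ _ d1(2)]
         sum.union_disjoint[OF _ _ d1(1)] f1 fs finite_UnI finite.emptyI finite_insert)
  have X: "(\<Sum>p\<in>?P \<times> T. h p) = (\<Sum>t\<in>T. h (a,t) + h (b,t))"
    using ab fT by (simp add: sum.cartesian_product' sum.distrib)
  have Y: "(\<Sum>p\<in>T \<times> ?P. h p) = (\<Sum>s\<in>T. h (s,a) + h (s,b))"
    using ab fT by (simp add: sum.cartesian_product' sum.swap[where A=T] sum.distrib)
  have Z: "(\<Sum>p\<in>{(a,b),(b,a)}. h p) = h (a,b) + h (b,a)"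
    using ab by simp
  show ?thesis using S X Y Z by linarith
qed

context piv begin

lemma split_off:
  fixes h :: "nat \<times> nat \<Rightarrow> real"
  defines "T \<equiv> {t. t < n \<and> t \<noteq> i - 1 \<and> t \<noteq> j - 1}"
  shows "(\<Sum>p\<in>offS n. h p) = (\<Sum>p\<in>{(s,t)\<in>offS n. s \<in> T \<and> t \<in> T}. h p)
     + (\<Sum>t\<in>T. h (i-1,t) + h (j-1,t)) + (\<Sum>s\<in>T. h (s,i-1) + h (s,j-1))
     + (h (i-1,j-1) + h (j-1,i-1))"
  unfolding T_def by (rule split_off_gen[OF i'n j'n i'j'])

lemma step_carrier: "step n (i,j) pa A \<in> carrier_mat n n"
  unfolding step_def nu_def by auto

lemma off_step:
  assumes A: "A \<in> carrier_mat n n"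
  shows "off n (step n (i,j) (\<phi>,\<alpha>) A) + ((cmod (A $$ (i-1,j-1)))\<^sup>2 + (cmod (A $$ (j-1,i-1)))\<^sup>2) = off n A"
proof -
  let ?B = "step n (i,j) (\<phi>,\<alpha>) A"
  define T where "T \<equiv> {t. t < n \<and> t \<noteq> i - 1 \<and> t \<noteq> j - 1}"
  have cs: "(cos \<phi>)\<^sup>2 + (sin \<phi>)\<^sup>2 = 1" by simp
  have 1: "(\<Sum>p\<in>{(s,t)\<in>offS n. s \<in> T \<and> t \<in> T}. (cmod (?B $$ p))\<^sup>2)
     = (\<Sum>p\<in>{(s,t)\<in>offS n. s \<in> T \<and> t \<in> T}. (cmod (A $$ p))\<^sup>2)"
    by (rule sum.cong) (use A in \<open>auto simp: T_def offS_def step_out\<close>)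
  have 2: "(\<Sum>t\<in>T. (cmod (?B $$ (i-1,t)))\<^sup>2 + (cmod (?B $$ (j-1,t)))\<^sup>2)
     = (\<Sum>t\<in>T. (cmod (A $$ (i-1,t)))\<^sup>2 + (cmod (A $$ (j-1,t)))\<^sup>2)"
  proof (rule sum.cong)
    fix t assume "t \<in> T"
    then have t: "t < n" "t \<noteq> i - 1" "t \<noteq> j - 1" unfolding T_def by auto
    show "(cmod (?B $$ (i-1,t)))\<^sup>2 + (cmod (?B $$ (j-1,t)))\<^sup>2 = (cmod (A $$ (i-1,t)))\<^sup>2 + (cmod (A $$ (j-1,t)))\<^sup>2"
      unfolding step_row_i[OF A t] step_row_j[OF A t] by (rule unit1[OF ww_norm cs])
  qed simp
  have 3: "(\<Sum>t\<in>T. (cmod (?B $$ (t,i-1)))\<^sup>2 + (cmod (?B $$ (t,j-1)))\<^sup>2)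
     = (\<Sum>t\<in>T. (cmod (A $$ (t,i-1)))\<^sup>2 + (cmod (A $$ (t,j-1)))\<^sup>2)"
  proof (rule sum.cong)
    fix t assume "t \<in> T"
    then have t: "t < n" "t \<noteq> i - 1" "t \<noteq> j - 1" unfolding T_def by auto
    show "(cmod (?B $$ (t,i-1)))\<^sup>2 + (cmod (?B $$ (t,j-1)))\<^sup>2 = (cmod (A $$ (t,i-1)))\<^sup>2 + (cmod (A $$ (t,j-1)))\<^sup>2"
      unfolding step_col_i[OF A t] step_col_j[OF A t] by (rule unit2[OF ww_norm cs])
  qed simp
  have p: "?B $$ (i-1,j-1) = 0" "?B $$ (j-1,i-1) = 0" using step_piv[OF A] by auto
  have sB: "off n ?B = (\<Sum>p\<in>{(s,t)\<in>offS n. s \<in> T \<and> t \<in> T}. (cmod (?B $$ p))\<^sup>2)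
     + (\<Sum>t\<in>T. (cmod (?B $$ (i-1,t)))\<^sup>2 + (cmod (?B $$ (j-1,t)))\<^sup>2)
     + (\<Sum>t\<in>T. (cmod (?B $$ (t,i-1)))\<^sup>2 + (cmod (?B $$ (t,j-1)))\<^sup>2)
     + ((cmod (?B $$ (i-1,j-1)))\<^sup>2 + (cmod (?B $$ (j-1,i-1)))\<^sup>2)"
    unfolding off_def T_def by (rule split_off[of "\<lambda>p. (cmod (?B $$ p))\<^sup>2"])
  have sA: "off n A = (\<Sum>p\<in>{(s,t)\<in>offS n. s \<in> T \<and> t \<in> T}. (cmod (A $$ p))\<^sup>2)
     + (\<Sum>t\<in>T. (cmod (A $$ (i-1,t)))\<^sup>2 + (cmod (A $$ (j-1,t)))\<^sup>2)
     + (\<Sum>t\<in>T. (cmod (A $$ (t,i-1)))\<^sup>2 + (cmod (A $$ (t,j-1)))\<^sup>2)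
     + ((cmod (A $$ (i-1,j-1)))\<^sup>2 + (cmod (A $$ (j-1,i-1)))\<^sup>2)"
    unfolding off_def T_def by (rule split_off[of "\<lambda>p. (cmod (A $$ p))\<^sup>2"])
  have z: "(cmod (0::complex))\<^sup>2 = 0" by simp
  show ?thesis using sA sB 1 2 3 p z by simp
qed

end



definition P1 :: "nat \<Rightarrow> (nat \<times> nat) list" where
  "P1 n = concat (map (\<lambda>t. map (\<lambda>s. (s,t)) [1..<t]) [2..<n+1])"

definition idx :: "nat \<Rightarrow> (nat \<times> nat) list" where
  "idx n = P1 n @ map prod.swap (P1 n)"

lemma ve_idx: "ve n A = vec_of_list (map (\<lambda>(s,t). A $$ (s-1,t-1)) (idx n))"
  unfolding ve_def idx_def P1_def by (simp add: map_concat comp_def)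

lemma set_P1: "set (P1 n) = {(s,t). 1 \<le> s \<and> s < t \<and> t \<le> n}"
  unfolding P1_def by (auto; rule_tac x=b in exI; force)

lemma P1_Suc: "P1 (Suc n) = (if n = 0 then [] else P1 n @ map (\<lambda>s. (s, Suc n)) [1..<Suc n])"
  unfolding P1_def by simp

lemma distinct_P1: "distinct (P1 n)"
proof (induction n)
  case 0 then show ?case by (simp add: P1_def)
next
  case (Suc n)
  show ?case
  proof (cases "n = 0")
    case True then show ?thesis by (simp add: P1_Suc)
  next
    case False
    have "distinct (map (\<lambda>s. (s, Suc n)) [1..<Suc n])" by (simp add: distinct_map inj_on_def)
    moreover have "set (P1 n) \<inter> set (map (\<lambda>s. (s, Suc n)) [1..<Suc n]) = {}"
      unfolding set_P1 by auto
    ultimately show ?thesis using Suc False by (simp add: P1_Suc)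
  qed
qed

lemma length_P1: "length (P1 n) = Nn n"
proof (induction n)
  case 0 then show ?case by (simp add: P1_def Nn_def)
next
  case (Suc n)
  show ?case
  proof (cases "n = 0")
    case True then show ?thesis by (simp add: P1_Suc Nn_def)
  next
    case False
    have "Nn (Suc n) = Nn n + n"
    proof -
      have "Suc n * n = n * (n - 1) + 2 * n" using False by (cases n) auto
      then show ?thesis unfolding Nn_def by simp
    qed
    then show ?thesis using Suc False by (simp add: P1_Suc)
  qed
qed

lemma distinct_idx: "distinct (idx n)"
proof -
  have "distinct (map prod.swap (P1 n))" using distinct_P1 by (simp add: distinct_map)
  moreover have "set (P1 n) \<inter> set (map prod.swap (P1 n)) = {}" unfolding set_map set_P1 by auto
  ultimately show ?thesis unfolding idx_def using distinct_P1 by simp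
qed

lemma length_idx: "length (idx n) = 2 * Nn n"
  unfolding idx_def by (simp add: length_P1)

lemma set_idx: "set (idx n) = {(s,t). 1 \<le> s \<and> s \<le> n \<and> 1 \<le> t \<and> t \<le> n \<and> s \<noteq> t}"
  unfolding idx_def set_append set_map set_P1 by auto

lemma dim_ve: "dim_vec (ve n A) = 2 * Nn n"
  unfolding ve_idx by (simp add: length_idx)

lemma vnorm2_ve: "vnorm2 (ve n A) = sqrt (off n A)"
proof -
  let ?g = "\<lambda>(s,t). A $$ (s-1,t-1)"
  have "(\<Sum>i<dim_vec (ve n A). (cmod (ve n A $ i))\<^sup>2) = (\<Sum>i<length (idx n). (cmod (?g (idx n ! i)))\<^sup>2)"
    unfolding ve_idx by (simp add: length_idx vec_of_list_index del: vec_of_list_map)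
  also have "\<dots> = sum_list (map (\<lambda>p. (cmod (?g p))\<^sup>2) (idx n))"
    by (simp add: sum_list_sum_nth atLeast0LessThan)
  also have "\<dots> = (\<Sum>p\<in>set (idx n). (cmod (?g p))\<^sup>2)"
    by (rule sum_list_distinct_conv_sum_set[OF distinct_idx])
  also have "\<dots> = off n A"
    unfolding off_def set_idx
    by (rule sum.reindex_bij_witness[where i="\<lambda>(s,t). (s+1,t+1)" and j="\<lambda>(s,t). (s-1,t-1)"])
       (auto simp: offS_def)
  finally show ?thesis unfolding vnorm2_def by simp
qed

lemma ve_surj:
  assumes "x \<in> carrier_vec (2 * Nn n)"
  shows "\<exists>A \<in> carrier_mat n n. x = ve n A"
proof -
  define A where "A = mat n n (\<lambda>(p,q). if (p+1,q+1) \<in> set (idx n) then x $ (SOME k. k < length (idx n) \<and> idx n ! k = (p+1,q+1)) else 0)"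
  have "ve n A = x"
  proof (rule eq_vecI)
    show "dim_vec (ve n A) = dim_vec x" using assms by (simp add: dim_ve)
  next
    fix k assume k: "k < dim_vec x"
    then have kl: "k < length (idx n)" using assms by (simp add: length_idx)
    obtain s t where st: "idx n ! k = (s,t)" by fastforce
    have mem: "(s,t) \<in> set (idx n)" using st kl by (metis nth_mem)
    then have b: "1 \<le> s" "s \<le> n" "1 \<le> t" "t \<le> n" unfolding set_idx by auto
    have "ve n A $ k = A $$ (s-1,t-1)" unfolding ve_idx using kl st by (simp add: vec_of_list_index del: vec_of_list_map)
    also have "\<dots> = x $ (SOME k. k < length (idx n) \<and> idx n ! k = (s,t))" unfolding A_def using b mem by simp
    also have "(SOME k. k < length (idx n) \<and> idx n ! k = (s,t)) = k"
    proof (rule some_equality)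
      show "k < length (idx n) \<and> idx n ! k = (s,t)" using kl st by simp
    next
      fix k' assume "k' < length (idx n) \<and> idx n ! k' = (s,t)"
      then show "k' = k" using kl st distinct_idx nth_eq_iff_index_eq by metis
    qed
    finally show "ve n A $ k = x $ k" .
  qed
  moreover have "A \<in> carrier_mat n n" unfolding A_def by simp
  ultimately show ?thesis by auto
qed



lemma step_carrier_gen: "step n ij pa A \<in> carrier_mat n n"
  unfolding step_def nu_def by auto

fun run :: "nat \<Rightarrow> ((nat \<times> nat) \<times> (real \<times> real)) list \<Rightarrow> complex mat \<Rightarrow> complex mat" where
  "run n [] A = A"
| "run n (q # rest) A = run n rest (step n (fst q) (snd q) A)"

definition pl :: "nat \<times> nat \<Rightarrow> complex mat \<Rightarrow> real" where
  "pl ij A = (cmod (A $$ (fst ij - 1, snd ij - 1)))\<^sup>2 + (cmod (A $$ (snd ij - 1, fst ij - 1)))\<^sup>2"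

fun loss :: "nat \<Rightarrow> ((nat \<times> nat) \<times> (real \<times> real)) list \<Rightarrow> complex mat \<Rightarrow> real" where
  "loss n [] A = 0"
| "loss n (q # rest) A = pl (fst q) A + loss n rest (step n (fst q) (snd q) A)"

definition cprod :: "((nat \<times> nat) \<times> (real \<times> real)) list \<Rightarrow> real" where
  "cprod st = prod_list (map (\<lambda>q. cos (fst (snd q))) st)"

lemma run_append: "run n (xs @ ys) A = run n ys (run n xs A)"
  by (induction xs arbitrary: A) auto

lemma loss_append: "loss n (xs @ ys) A = loss n xs A + loss n ys (run n xs A)"
  by (induction xs arbitrary: A) auto

lemma loss_nonneg: "0 \<le> loss n st A"
  by (induction st arbitrary: A) (auto simp: pl_def)

lemma run_carrier: "A \<in> carrier_mat n n \<Longrightarrow> run n st A \<in> carrier_mat n n"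
  by (induction st arbitrary: A) (auto simp: step_carrier_gen)

lemma cprod_le1: "\<bar>cprod st\<bar> \<le> 1"
proof (induction st)
  case Nil then show ?case by (simp add: cprod_def)
next
  case (Cons q st)
  have "\<bar>cprod (q # st)\<bar> = \<bar>cos (fst (snd q))\<bar> * \<bar>cprod st\<bar>" by (simp add: cprod_def abs_mult)
  also have "\<dots> \<le> 1 * 1" using Cons by (intro mult_mono) auto
  finally show ?case by simp
qed

lemma cprod_ge:
  assumes "0 \<le> \<nu>" "\<forall>q\<in>set st. \<nu> \<le> \<bar>cos (fst (snd q))\<bar>"
  shows "\<nu> ^ length st \<le> \<bar>cprod st\<bar>"
  using assms(2)
proof (induction st)
  case Nil then show ?case by (simp add: cprod_def)
next
  case (Cons q st)
  have "\<nu> ^ length (q # st) = \<nu> * \<nu> ^ length st" by simp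
  also have "\<dots> \<le> \<bar>cos (fst (snd q))\<bar> * \<bar>cprod st\<bar>"
    using Cons assms(1) by (intro mult_mono) auto
  also have "\<dots> = \<bar>cprod (q # st)\<bar>" by (simp add: cprod_def abs_mult)
  finally show ?case .
qed

lemma off_run:
  assumes "\<forall>q\<in>set st. 1 \<le> fst (fst q) \<and> fst (fst q) < snd (fst q) \<and> snd (fst q) \<le> n"
  shows "A \<in> carrier_mat n n \<Longrightarrow> off n (run n st A) + loss n st A = off n A"
  using assms
proof (induction st arbitrary: A)
  case Nil then show ?case by simp
next
  case (Cons q rest)
  obtain i j \<phi> \<alpha> where q: "q = ((i,j),(\<phi>,\<alpha>))" by (metis prod.collapse)
  interpret piv n i j using Cons.prems(2) q by unfold_locales auto
  have "off n (run n rest (step n (i,j) (\<phi>,\<alpha>) A)) + loss n rest (step n (i,j) (\<phi>,\<alpha>) A)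
     = off n (step n (i,j) (\<phi>,\<alpha>) A)"
    using Cons.IH[OF step_carrier] Cons.prems(2) by auto
  then show ?case using off_step[OF Cons.prems(1), of \<phi> \<alpha>] q by (simp add: pl_def)
qed



lemma sin_ww: "cmod (- ww \<alpha> * complex_of_real (sin \<phi>)) \<le> 1"
  by (simp add: norm_mult ww_norm abs_sin_le_one)
lemma sin_cww: "cmod (cnj (ww \<alpha>) * complex_of_real (sin \<phi>)) \<le> 1"
  by (simp add: norm_mult ww_norm abs_sin_le_one)

lemma bnd3:
  fixes y z :: complex and C B :: real
  assumes "\<bar>C\<bar> \<le> 1" "cmod y \<le> B" "cmod z \<le> 1"
  shows "cmod (complex_of_real C * (y * z)) \<le> B" "cmod (complex_of_real C * (z * y)) \<le> B"
proof -
  have B: "0 \<le> B" using assms(2) norm_ge_zero order_trans by blast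
  have "cmod (complex_of_real C * (y * z)) = \<bar>C\<bar> * (cmod y * cmod z)" by (simp add: norm_mult)
  also have "\<dots> \<le> 1 * (B * 1)" using assms B by (intro mult_mono) auto
  finally show "cmod (complex_of_real C * (y * z)) \<le> B" by simp
  then show "cmod (complex_of_real C * (z * y)) \<le> B" by (simp add: mult.commute)
qed

lemma tri_step:
  fixes a b :: complex and l B :: real
  assumes "cmod a \<le> l * B" "cmod b \<le> B"
  shows "cmod (a + b) \<le> (l + 1) * B"
  using norm_triangle_ineq[of a b] assms by (simp add: algebra_simps)

lemma track_col:
  fixes st :: "((nat \<times> nat) \<times> (real \<times> real)) list"
  assumes c: "c < n" and x: "x < c"
  shows "Y \<in> carrier_mat n n \<Longrightarrow>
    (\<forall>q\<in>set st. snd (fst q) = Suc c \<and> 1 \<le> fst (fst q) \<and> fst (fst q) \<le> c \<and> fst (fst q) \<noteq> Suc x) \<Longrightarrow>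
    distinct (map (fst \<circ> fst) st) \<Longrightarrow>
    (\<forall>q\<in>set st. cmod (Y $$ (x, fst (fst q) - 1)) \<le> B) \<Longrightarrow>
    cmod (run n st Y $$ (x,c) - complex_of_real (cprod st) * Y $$ (x,c)) \<le> real (length st) * B"
proof (induction st arbitrary: Y)
  case Nil then show ?case by (simp add: cprod_def)
next
  case (Cons q rest)
  obtain i j \<phi> \<alpha> where q: "q = ((i,j),(\<phi>,\<alpha>))" by (metis prod.collapse)
  have j: "j = Suc c" and i: "1 \<le> i" "i \<le> c" "i \<noteq> Suc x" using Cons.prems(2) q by auto
  interpret piv n i j using i j c by unfold_locales auto
  let ?Y' = "step n (i,j) (\<phi>,\<alpha>) Y"
  have Y': "?Y' \<in> carrier_mat n n" by (rule step_carrier)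
  have xc: "x < n" "x \<noteq> i - 1" "x \<noteq> j - 1" using x c i j by auto
  have B0: "cmod (Y $$ (x, i - 1)) \<le> B" using Cons.prems(4) q by auto
  have Y'xc: "?Y' $$ (x,c) = Y $$ (x,i-1) * (- ww \<alpha> * complex_of_real (sin \<phi>)) + Y $$ (x,c) * complex_of_real (cos \<phi>)"
    using step_col_j[OF Cons.prems(1) xc] j by simp
  have IH: "cmod (run n rest ?Y' $$ (x,c) - complex_of_real (cprod rest) * ?Y' $$ (x,c)) \<le> real (length rest) * B"
  proof (rule Cons.IH[OF Y'])
    show "\<forall>q\<in>set rest. snd (fst q) = Suc c \<and> 1 \<le> fst (fst q) \<and> fst (fst q) \<le> c \<and> fst (fst q) \<noteq> Suc x"
      using Cons.prems(2) by auto
    show "distinct (map (fst \<circ> fst) rest)" using Cons.prems(3) by (simp add: comp_def)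
    show "\<forall>q\<in>set rest. cmod (?Y' $$ (x, fst (fst q) - 1)) \<le> B"
    proof
      fix q' assume q': "q' \<in> set rest"
      have ne: "fst (fst q') \<noteq> i" using Cons.prems(3) q q' by force
      have r: "1 \<le> fst (fst q')" "fst (fst q') \<le> c" "fst (fst q') \<noteq> Suc x" using Cons.prems(2) q' by auto
      have "?Y' $$ (x, fst (fst q') - 1) = Y $$ (x, fst (fst q') - 1)"
        by (rule step_out[OF Cons.prems(1)]) (use xc r ne i j c in auto)
      then show "cmod (?Y' $$ (x, fst (fst q') - 1)) \<le> B" using Cons.prems(4) q' by auto
    qed
  qed
  have eq: "run n (q # rest) Y $$ (x,c) - complex_of_real (cprod (q # rest)) * Y $$ (x,c)
     = (run n rest ?Y' $$ (x,c) - complex_of_real (cprod rest) * ?Y' $$ (x,c))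
       + complex_of_real (cprod rest) * (Y $$ (x,i-1) * (- ww \<alpha> * complex_of_real (sin \<phi>)))"
    unfolding Y'xc using q by (simp add: cprod_def algebra_simps)
  have "cmod (complex_of_real (cprod rest) * (Y $$ (x,i-1) * (- ww \<alpha> * complex_of_real (sin \<phi>)))) \<le> B"
    by (rule bnd3(1)[OF cprod_le1 B0 sin_ww])
  from tri_step[OF IH this] show ?case unfolding eq by (simp add: add.commute)
qed

lemma track_row:
  fixes st :: "((nat \<times> nat) \<times> (real \<times> real)) list"
  assumes c: "c < n" and x: "x < c"
  shows "Y \<in> carrier_mat n n \<Longrightarrow>
    (\<forall>q\<in>set st. snd (fst q) = Suc c \<and> 1 \<le> fst (fst q) \<and> fst (fst q) \<le> c \<and> fst (fst q) \<noteq> Suc x) \<Longrightarrow>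
    distinct (map (fst \<circ> fst) st) \<Longrightarrow>
    (\<forall>q\<in>set st. cmod (Y $$ (fst (fst q) - 1, x)) \<le> B) \<Longrightarrow>
    cmod (run n st Y $$ (c,x) - complex_of_real (cprod st) * Y $$ (c,x)) \<le> real (length st) * B"
proof (induction st arbitrary: Y)
  case Nil then show ?case by (simp add: cprod_def)
next
  case (Cons q rest)
  obtain i j \<phi> \<alpha> where q: "q = ((i,j),(\<phi>,\<alpha>))" by (metis prod.collapse)
  have j: "j = Suc c" and i: "1 \<le> i" "i \<le> c" "i \<noteq> Suc x" using Cons.prems(2) q by auto
  interpret piv n i j using i j c by unfold_locales auto
  let ?Y' = "step n (i,j) (\<phi>,\<alpha>) Y"
  have Y': "?Y' \<in> carrier_mat n n" by (rule step_carrier)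
  have xc: "x < n" "x \<noteq> i - 1" "x \<noteq> j - 1" using x c i j by auto
  have B0: "cmod (Y $$ (i - 1, x)) \<le> B" using Cons.prems(4) q by auto
  have Y'xc: "?Y' $$ (c,x) = - cnj (ww \<alpha>) * complex_of_real (sin \<phi>) * Y $$ (i-1,x) + complex_of_real (cos \<phi>) * Y $$ (c,x)"
    using step_row_j[OF Cons.prems(1) xc] j by simp
  have IH: "cmod (run n rest ?Y' $$ (c,x) - complex_of_real (cprod rest) * ?Y' $$ (c,x)) \<le> real (length rest) * B"
  proof (rule Cons.IH[OF Y'])
    show "\<forall>q\<in>set rest. snd (fst q) = Suc c \<and> 1 \<le> fst (fst q) \<and> fst (fst q) \<le> c \<and> fst (fst q) \<noteq> Suc x"
      using Cons.prems(2) by auto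
    show "distinct (map (fst \<circ> fst) rest)" using Cons.prems(3) by (simp add: comp_def)
    show "\<forall>q\<in>set rest. cmod (?Y' $$ (fst (fst q) - 1, x)) \<le> B"
    proof
      fix q' assume q': "q' \<in> set rest"
      have ne: "fst (fst q') \<noteq> i" using Cons.prems(3) q q' by force
      have r: "1 \<le> fst (fst q')" "fst (fst q') \<le> c" "fst (fst q') \<noteq> Suc x" using Cons.prems(2) q' by auto
      have "?Y' $$ (fst (fst q') - 1, x) = Y $$ (fst (fst q') - 1, x)"
        by (rule step_out[OF Cons.prems(1)]) (use xc r ne i j c in auto)
      then show "cmod (?Y' $$ (fst (fst q') - 1, x)) \<le> B" using Cons.prems(4) q' by auto
    qed
  qed
  have eq: "run n (q # rest) Y $$ (c,x) - complex_of_real (cprod (q # rest)) * Y $$ (c,x)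
     = (run n rest ?Y' $$ (c,x) - complex_of_real (cprod rest) * ?Y' $$ (c,x))
       + complex_of_real (cprod rest) * (- cnj (ww \<alpha>) * complex_of_real (sin \<phi>) * Y $$ (i-1,x))"
    unfolding Y'xc using q by (simp add: cprod_def algebra_simps)
  have "cmod (complex_of_real (cprod rest) * ((- cnj (ww \<alpha>) * complex_of_real (sin \<phi>)) * Y $$ (i-1,x))) \<le> B"
    by (rule bnd3(2)[OF cprod_le1 B0]) (simp add: norm_mult ww_norm abs_sin_le_one)
  from tri_step[OF IH this] show ?case unfolding eq by (simp add: add.commute)
qed


lemma comb2:
  fixes u v a b :: complex
  assumes "cmod u \<le> 1" "cmod v \<le> 1" "cmod a \<le> M" "cmod b \<le> M"
  shows "cmod (u * a + v * b) \<le> 2 * M" "cmod (a * u + b * v) \<le> 2 * M"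
proof -
  have M: "0 \<le> M" using assms(3) norm_ge_zero order_trans by blast
  have "cmod (u * a + v * b) \<le> cmod u * cmod a + cmod v * cmod b"
    using norm_triangle_ineq[of "u*a" "v*b"] by (simp add: norm_mult)
  also have "\<dots> \<le> 1 * M + 1 * M" using assms M by (intro add_mono mult_mono) auto
  finally show "cmod (u * a + v * b) \<le> 2 * M" by simp
  then show "cmod (a * u + b * v) \<le> 2 * M" by (simp add: mult.commute)
qed

lemma cos_le1: "cmod (complex_of_real (cos \<phi>)) \<le> 1" by (simp add: abs_cos_le_one)
lemma sin_w: "cmod (ww \<alpha> * complex_of_real (sin \<phi>)) \<le> 1"
  by (simp add: norm_mult ww_norm abs_sin_le_one)
lemma sin_mcw: "cmod (- cnj (ww \<alpha>) * complex_of_real (sin \<phi>)) \<le> 1"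
  by (simp add: norm_mult ww_norm abs_sin_le_one)

context piv begin

lemma step_block:
  assumes A: "A \<in> carrier_mat n n" and jc: "j \<le> Suc c" and cn: "c < n"
    and bnd: "\<forall>s t. s \<le> c \<longrightarrow> t \<le> c \<longrightarrow> s \<noteq> t \<longrightarrow> cmod (A $$ (s,t)) \<le> M"
    and st: "s \<le> c" "t \<le> c" "s \<noteq> t"
  shows "cmod (step n (i,j) (\<phi>,\<alpha>) A $$ (s,t)) \<le> 2 * M"
proof -
  have M: "0 \<le> M" using bnd[rule_format, of 0 1] cn jc i1 ij norm_ge_zero order_trans
    by (metis One_nat_def Suc_le_eq le_SucE less_imp_le_nat nat_neq_iff not_less_eq_eq zero_less_Suc)
  have sn: "s < n" "t < n" using st cn by auto
  have ic: "i - 1 \<le> c" "j - 1 \<le> c" using jc ij by auto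
  have b: "\<And>s t. s \<le> c \<Longrightarrow> t \<le> c \<Longrightarrow> s \<noteq> t \<Longrightarrow> cmod (A $$ (s,t)) \<le> M" using bnd by blast
  consider "(s = i - 1 \<and> t = j - 1) \<or> (s = j - 1 \<and> t = i - 1)"
    | "s = i - 1" "t \<noteq> i - 1" "t \<noteq> j - 1"
    | "s = j - 1" "t \<noteq> i - 1" "t \<noteq> j - 1"
    | "t = i - 1" "s \<noteq> i - 1" "s \<noteq> j - 1"
    | "t = j - 1" "s \<noteq> i - 1" "s \<noteq> j - 1"
    | "s \<noteq> i - 1" "s \<noteq> j - 1" "t \<noteq> i - 1" "t \<noteq> j - 1"
    using st(3) by blast
  then show ?thesis
  proof cases
    case 1 then show ?thesis using step_piv[OF A, of \<phi> \<alpha>] M by auto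
  next
    case 2 then show ?thesis using step_row_i[OF A sn(2) 2(2,3)]
      comb2(1)[OF cos_le1 sin_w b b] ic st by auto
  next
    case 3 then show ?thesis using step_row_j[OF A sn(2) 3(2,3)]
      comb2(1)[OF sin_mcw cos_le1 b b] ic st by auto
  next
    case 4 then show ?thesis using step_col_i[OF A sn(1) 4(2,3)]
      comb2(2)[OF cos_le1 sin_cww b b] ic st by auto
  next
    case 5 then show ?thesis using step_col_j[OF A sn(1) 5(2,3)]
      comb2(2)[OF sin_ww cos_le1 b b] ic st by auto
  next
    case 6 then show ?thesis using step_out[OF A sn 6] b[OF st] M by auto
  qed
qed

end

lemma growth:
  assumes cn: "c < n"
  shows "Y \<in> carrier_mat n n \<Longrightarrow> (\<forall>q\<in>set st. 1 \<le> fst (fst q) \<and> fst (fst q) < snd (fst q) \<and> snd (fst q) \<le> Suc c) \<Longrightarrow>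
    (\<forall>s t. s \<le> c \<longrightarrow> t \<le> c \<longrightarrow> s \<noteq> t \<longrightarrow> cmod (Y $$ (s,t)) \<le> M) \<Longrightarrow>
    (\<forall>s t. s \<le> c \<longrightarrow> t \<le> c \<longrightarrow> s \<noteq> t \<longrightarrow> cmod (run n st Y $$ (s,t)) \<le> 2 ^ length st * M)"
proof (induction st arbitrary: Y M)
  case Nil then show ?case by simp
next
  case (Cons q rest)
  obtain i j \<phi> \<alpha> where q: "q = ((i,j),(\<phi>,\<alpha>))" by (metis prod.collapse)
  have hij: "1 \<le> i" "i < j" "j \<le> Suc c" using Cons.prems(2) q by auto
  interpret piv n i j using hij cn by unfold_locales auto
  have "\<forall>s t. s \<le> c \<longrightarrow> t \<le> c \<longrightarrow> s \<noteq> t \<longrightarrow> cmod (step n (i,j) (\<phi>,\<alpha>) Y $$ (s,t)) \<le> 2 * M"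
    using step_block[OF Cons.prems(1) hij(3) cn Cons.prems(3)] by blast
  from Cons.IH[OF step_carrier _ this] Cons.prems(2) q
  have "\<forall>s t. s \<le> c \<longrightarrow> t \<le> c \<longrightarrow> s \<noteq> t \<longrightarrow> cmod (run n rest (step n (i,j) (\<phi>,\<alpha>) Y) $$ (s,t)) \<le> 2 ^ length rest * (2 * M)"
    by simp
  moreover have "run n (q # rest) Y = run n rest (step n (i,j) (\<phi>,\<alpha>) Y)" using q by simp
  moreover have "(2::real) ^ length (q # rest) * M = 2 ^ length rest * (2 * M)" by simp
  ultimately show ?case by metis
qed



lemma loss_split_pl:
  assumes "st = st1 @ q0 # st2"
  shows "pl (fst q0) (run n st1 Y) \<le> loss n st Y"
proof -
  have "loss n st Y = loss n st1 Y + (pl (fst q0) (run n st1 Y) + loss n st2 (step n (fst q0) (snd q0) (run n st1 Y)))"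
    using assms by (simp add: loss_append)
  then show ?thesis using loss_nonneg[of n st1 Y] loss_nonneg[of n st2 "step n (fst q0) (snd q0) (run n st1 Y)"] by linarith
qed

lemma phase:
  fixes \<nu> B L :: real
  assumes \<nu>: "0 < \<nu>" "\<nu> \<le> 1" and c: "1 \<le> c" "c < n" and Y: "Y \<in> carrier_mat n n"
    and dps: "distinct ps" and sps: "set ps = {1..c}"
    and mst: "map fst st = map (\<lambda>p. (p, Suc c)) ps"
    and cosb: "\<forall>q\<in>set st. \<nu> \<le> \<bar>cos (fst (snd q))\<bar>"
    and B: "0 \<le> B" and bY: "\<forall>s t. s < c \<longrightarrow> t < c \<longrightarrow> s \<noteq> t \<longrightarrow> cmod (Y $$ (s,t)) \<le> B"
    and L: "loss n st Y \<le> L"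
  shows "\<forall>s t. s \<le> c \<longrightarrow> t \<le> c \<longrightarrow> s \<noteq> t \<longrightarrow> cmod (run n st Y $$ (s,t)) \<le> 2 ^ c * ((sqrt L + c * B) / \<nu> ^ c)"
proof -
  define M where "M = (sqrt L + c * B) / \<nu> ^ c"
  have L0: "0 \<le> L" using L loss_nonneg[of n st Y] by linarith
  have nuc: "0 < \<nu> ^ c" "\<nu> ^ c \<le> 1" using \<nu> by (auto simp: power_le_one)
  have lenps: "length ps = c" using distinct_card[OF dps] sps by simp
  have lenst: "length st = c" using mst lenps by (metis length_map)
  have key: "cmod (Y $$ (x,c)) \<le> M \<and> cmod (Y $$ (c,x)) \<le> M" if x: "x < c" for x
  proof -
    have "Suc x \<in> set ps" using sps x by auto
    then obtain ps1 ps2 where ps: "ps = ps1 @ Suc x # ps2" by (meson split_list)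
    let ?f = "\<lambda>p. (p, Suc c)"
    have "map fst st = map ?f ps1 @ (?f (Suc x) # map ?f ps2)" using mst ps by simp
    then obtain st1 st3 where st: "st = st1 @ st3" and m1: "map fst st1 = map ?f ps1"
      and m3: "map fst st3 = ?f (Suc x) # map ?f ps2"
      by (auto simp: map_eq_append_conv)
    then obtain q0 st2 where st3: "st3 = q0 # st2" and q0: "fst q0 = (Suc x, Suc c)"
      by (auto simp: map_eq_Cons_conv)
    let ?Y1 = "run n st1 Y"
    have pl: "pl (Suc x, Suc c) ?Y1 \<le> L"
      using loss_split_pl[of st st1 q0 st2 n Y] st st3 q0 L by simp
    have Y1: "cmod (?Y1 $$ (x,c)) \<le> sqrt L" "cmod (?Y1 $$ (c,x)) \<le> sqrt L"
    proof -
      have "(cmod (?Y1 $$ (x,c)))\<^sup>2 + (cmod (?Y1 $$ (c,x)))\<^sup>2 \<le> L" using pl unfolding pl_def by simp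
      moreover have "0 \<le> (cmod (?Y1 $$ (x,c)))\<^sup>2" "0 \<le> (cmod (?Y1 $$ (c,x)))\<^sup>2" by auto
      ultimately have "(cmod (?Y1 $$ (x,c)))\<^sup>2 \<le> L" "(cmod (?Y1 $$ (c,x)))\<^sup>2 \<le> L" by linarith+
      then show "cmod (?Y1 $$ (x,c)) \<le> sqrt L" "cmod (?Y1 $$ (c,x)) \<le> sqrt L"
        by (auto intro!: real_le_rsqrt)
    qed
    have dps1: "distinct ps1" "Suc x \<notin> set ps1" using dps ps by auto
    have sps1: "set ps1 \<subseteq> {1..c}" using sps ps by auto
    have fst_st1: "set (map fst st1) = ?f ` set ps1" using m1 by (metis set_map)
    have P1: "\<forall>q\<in>set st1. snd (fst q) = Suc c \<and> 1 \<le> fst (fst q) \<and> fst (fst q) \<le> c \<and> fst (fst q) \<noteq> Suc x"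
    proof
      fix q assume "q \<in> set st1"
      then have "fst q \<in> ?f ` set ps1" using fst_st1 by auto
      then show "snd (fst q) = Suc c \<and> 1 \<le> fst (fst q) \<and> fst (fst q) \<le> c \<and> fst (fst q) \<noteq> Suc x"
        using sps1 dps1(2) by auto
    qed
    have P2: "distinct (map (fst \<circ> fst) st1)"
    proof -
      have "map (fst \<circ> fst) st1 = map fst (map fst st1)" by simp
      also have "\<dots> = ps1" unfolding m1 by (simp add: comp_def)
      finally show ?thesis using dps1 by simp
    qed
    have P3: "\<forall>q\<in>set st1. cmod (Y $$ (x, fst (fst q) - 1)) \<le> B" "\<forall>q\<in>set st1. cmod (Y $$ (fst (fst q) - 1, x)) \<le> B"
      using P1 bY x by (auto intro!: bY[rule_format])
    have len1: "length st1 \<le> c" using st lenst by simp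
    have cosb1: "\<forall>q\<in>set st1. \<nu> \<le> \<bar>cos (fst (snd q))\<bar>" using cosb st by auto
    have Cge: "\<nu> ^ c \<le> \<bar>cprod st1\<bar>"
      using cprod_ge[of \<nu> st1] cosb1 \<nu> power_decreasing[OF len1, of \<nu>] by auto
    have tc: "cmod (?Y1 $$ (x,c) - complex_of_real (cprod st1) * Y $$ (x,c)) \<le> real (length st1) * B"
      by (rule track_col[OF c(2) x Y P1 P2 P3(1)])
    have tr: "cmod (?Y1 $$ (c,x) - complex_of_real (cprod st1) * Y $$ (c,x)) \<le> real (length st1) * B"
      by (rule track_row[OF c(2) x Y P1 P2 P3(2)])
    have lb: "real (length st1) * B \<le> c * B" using len1 B by (intro mult_right_mono) auto
    have fin: "cmod z \<le> M" if tz: "cmod (w - complex_of_real (cprod st1) * z) \<le> real (length st1) * B"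
      and wz: "cmod w \<le> sqrt L" for w z
    proof -
      have "\<nu> ^ c * cmod z \<le> \<bar>cprod st1\<bar> * cmod z" using Cge by (intro mult_right_mono) auto
      also have "\<dots> = cmod (complex_of_real (cprod st1) * z)" by (simp add: norm_mult)
      also have "\<dots> \<le> cmod w + cmod (w - complex_of_real (cprod st1) * z)"
        using norm_triangle_ineq4[of w "w - complex_of_real (cprod st1) * z"] by simp
      also have "\<dots> \<le> sqrt L + c * B" using wz tz lb by linarith
      finally show ?thesis unfolding M_def using nuc by (simp add: pos_le_divide_eq mult.commute)
    qed
    show ?thesis using fin[OF tc Y1(1)] fin[OF tr Y1(2)] by simp
  qed
  have BM: "B \<le> M"
  proof -
    have "B \<le> c * B" using c B by (simp add: mult_le_cancel_right1)
    also have "\<dots> \<le> sqrt L + c * B" using L0 by simp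
    also have "\<dots> \<le> (sqrt L + c * B) / \<nu> ^ c" using nuc L0 B
      by (simp add: le_divide_eq mult_left_le)
    finally show ?thesis unfolding M_def .
  qed
  have M0: "0 \<le> M" using B BM by linarith
  have bM: "\<forall>s t. s \<le> c \<longrightarrow> t \<le> c \<longrightarrow> s \<noteq> t \<longrightarrow> cmod (Y $$ (s,t)) \<le> M"
  proof (intro allI impI)
    fix s t assume st: "s \<le> c" "t \<le> c" "s \<noteq> t"
    show "cmod (Y $$ (s,t)) \<le> M"
    proof (cases "s = c")
      case True then show ?thesis using key[of t] st by auto
    next
      case False
      show ?thesis
      proof (cases "t = c")
        case True then show ?thesis using key[of s] st False by auto
      next
        case False2: False
        then have "s < c" "t < c" using st False by auto
        then have "cmod (Y $$ (s,t)) \<le> B" using bY st by blast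
        then show ?thesis using BM by linarith
      qed
    qed
  qed
  have piv: "\<forall>q\<in>set st. 1 \<le> fst (fst q) \<and> fst (fst q) < snd (fst q) \<and> snd (fst q) \<le> Suc c"
  proof
    fix q assume "q \<in> set st"
    then have "fst q \<in> set (map fst st)" by auto
    then show "1 \<le> fst (fst q) \<and> fst (fst q) < snd (fst q) \<and> snd (fst q) \<le> Suc c"
      unfolding mst using sps by auto
  qed
  show ?thesis using growth[OF c(2) Y piv bM] lenst unfolding M_def by simp
qed



definition ordm :: "(nat \<Rightarrow> nat \<Rightarrow> nat) \<Rightarrow> nat \<Rightarrow> (nat \<times> nat) list" where
  "ordm \<tau> m = concat (map (\<lambda>j. map (\<lambda>k. (\<tau> j k, j)) [1..<j]) [2..<m+1])"

lemma ordm_Suc: "1 \<le> m \<Longrightarrow> ordm \<tau> (Suc m) = ordm \<tau> m @ map (\<lambda>p. (p, Suc m)) (map (\<tau> (Suc m)) [1..<Suc m])"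
  unfolding ordm_def by (simp add: upt_Suc_append)

fun Dc :: "real \<Rightarrow> nat \<Rightarrow> real" where
  "Dc \<nu> 0 = 0"
| "Dc \<nu> (Suc m) = 2 ^ m * (1 + m * Dc \<nu> m) / \<nu> ^ m"

lemma Dc_nonneg: "0 < \<nu> \<Longrightarrow> 0 \<le> Dc \<nu> m"
  by (induction m) auto

lemma main_ind:
  fixes \<nu> :: real
  assumes \<nu>: "0 < \<nu>" "\<nu> \<le> 1" and \<tau>: "\<forall>j\<in>{2..n}. bij_betw (\<tau> j) {1..<j} {1..<j}"
  shows "m \<le> n \<Longrightarrow> map fst st = ordm \<tau> m \<Longrightarrow> (\<forall>q\<in>set st. \<nu> \<le> \<bar>cos (fst (snd q))\<bar>) \<Longrightarrow>
    A \<in> carrier_mat n n \<Longrightarrow>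
    \<forall>s t. s < m \<longrightarrow> t < m \<longrightarrow> s \<noteq> t \<longrightarrow> cmod (run n st A $$ (s,t)) \<le> Dc \<nu> m * sqrt (loss n st A)"
proof (induction m arbitrary: st)
  case 0 then show ?case by simp
next
  case (Suc m)
  show ?case
  proof (cases "m = 0")
    case True then show ?thesis by auto
  next
    case False
    let ?ps = "map (\<tau> (Suc m)) [1..<Suc m]"
    have "map fst st = ordm \<tau> m @ map (\<lambda>p. (p, Suc m)) ?ps"
      using Suc.prems(2) ordm_Suc[of m \<tau>] False by simp
    then obtain st1 st2 where st: "st = st1 @ st2" and m1: "map fst st1 = ordm \<tau> m"
      and m2: "map fst st2 = map (\<lambda>p. (p, Suc m)) ?ps"
      by (auto simp: map_eq_append_conv)
    let ?Y = "run n st1 A"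
    let ?L = "loss n st A"
    have Y: "?Y \<in> carrier_mat n n" using run_carrier[OF Suc.prems(4)] .
    have Lsplit: "?L = loss n st1 A + loss n st2 ?Y" using st by (simp add: loss_append)
    have L1: "loss n st1 A \<le> ?L" using Lsplit loss_nonneg[of n st2 ?Y] by linarith
    have D0: "0 \<le> Dc \<nu> m" using Dc_nonneg[OF \<nu>(1)] .
    have IH: "\<forall>s t. s < m \<longrightarrow> t < m \<longrightarrow> s \<noteq> t \<longrightarrow> cmod (?Y $$ (s,t)) \<le> Dc \<nu> m * sqrt (loss n st1 A)"
      using Suc.IH[OF _ m1 _ Suc.prems(4)] Suc.prems(1,3) st by auto
    have bY: "\<forall>s t. s < m \<longrightarrow> t < m \<longrightarrow> s \<noteq> t \<longrightarrow> cmod (?Y $$ (s,t)) \<le> Dc \<nu> m * sqrt ?L"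
    proof (intro allI impI)
      fix s t assume "s < m" "t < m" "s \<noteq> t"
      then have "cmod (?Y $$ (s,t)) \<le> Dc \<nu> m * sqrt (loss n st1 A)" using IH by blast
      also have "\<dots> \<le> Dc \<nu> m * sqrt ?L" using L1 D0 by (intro mult_left_mono) auto
      finally show "cmod (?Y $$ (s,t)) \<le> Dc \<nu> m * sqrt ?L" .
    qed
    have bij: "bij_betw (\<tau> (Suc m)) {1..<Suc m} {1..<Suc m}" using \<tau> Suc.prems(1) False by auto
    have dps: "distinct ?ps" unfolding distinct_map using bij by (simp add: bij_betw_def del: upt_Suc)
    have sps: "set ?ps = {1..m}"
    proof -
      have "set ?ps = \<tau> (Suc m) ` {1..<Suc m}" by (simp del: upt_Suc)
      also have "\<dots> = {1..<Suc m}" using bij by (simp add: bij_betw_def)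
      finally show ?thesis by auto
    qed
    have B0: "0 \<le> Dc \<nu> m * sqrt ?L" using D0 loss_nonneg[of n st A] by simp
    have cosb2: "\<forall>q\<in>set st2. \<nu> \<le> \<bar>cos (fst (snd q))\<bar>" using Suc.prems(3) st by auto
    have ph: "\<forall>s t. s \<le> m \<longrightarrow> t \<le> m \<longrightarrow> s \<noteq> t \<longrightarrow>
        cmod (run n st2 ?Y $$ (s,t)) \<le> 2 ^ m * ((sqrt ?L + m * (Dc \<nu> m * sqrt ?L)) / \<nu> ^ m)"
      by (rule phase[OF \<nu> _ _ Y dps sps m2 cosb2 B0 bY]) (use False Suc.prems(1) Lsplit loss_nonneg[of n st1 A] in auto)
    have eq: "2 ^ m * ((sqrt ?L + m * (Dc \<nu> m * sqrt ?L)) / \<nu> ^ m) = Dc \<nu> (Suc m) * sqrt ?L"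
    proof -
      have nz: "\<nu> ^ m \<noteq> 0" using \<nu> by simp
      show ?thesis using nz by (simp add: field_simps)
    qed
    show ?thesis
    proof (intro allI impI)
      fix s t assume "s < Suc m" "t < Suc m" "s \<noteq> t"
      then have "cmod (run n st2 ?Y $$ (s,t)) \<le> 2 ^ m * ((sqrt ?L + m * (Dc \<nu> m * sqrt ?L)) / \<nu> ^ m)"
        using ph by simp
      note this[unfolded eq]
      moreover have "run n st A = run n st2 ?Y" by (simp add: st run_append)
      ultimately show "cmod (run n st A $$ (s,t)) \<le> Dc \<nu> (Suc m) * sqrt ?L" by simp
    qed
  qed
qed

lemma jc_link:
  "J \<in> jacobi_class n \<nu> ord \<Longrightarrow> J \<in> carrier_mat (2 * Nn n) (2 * Nn n) \<and>
    (\<exists>st. map fst st = ord \<and> (\<forall>q\<in>set st. \<nu> \<le> \<bar>cos (fst (snd q))\<bar>) \<and>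
       (\<forall>A\<in>carrier_mat n n. J *\<^sub>v ve n A = ve n (run n st A)))"
proof (induction ord arbitrary: J)
  case Nil
  then have J: "J = 1\<^sub>m (2 * Nn n)" by simp
  have "\<forall>A\<in>carrier_mat n n. J *\<^sub>v ve n A = ve n (run n [] A)"
    using J by (auto intro!: one_mult_mat_vec carrier_vecI simp: dim_ve)
  then show ?case using J by (intro conjI exI[of _ "[]"]) auto
next
  case (Cons p ps)
  then obtain J' R where J: "J = J' * R" and J': "J' \<in> jacobi_class n \<nu> ps" and R: "R \<in> ann_set n \<nu> p"
    by auto
  obtain st' where J'c: "J' \<in> carrier_mat (2 * Nn n) (2 * Nn n)" and st': "map fst st' = ps"
    "\<forall>q\<in>set st'. \<nu> \<le> \<bar>cos (fst (snd q))\<bar>" "\<forall>A\<in>carrier_mat n n. J' *\<^sub>v ve n A = ve n (run n st' A)"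
    using Cons.IH[OF J'] by blast
  obtain \<phi> \<alpha> where cb: "\<nu> \<le> \<bar>cos \<phi>\<bar>" and ann: "is_annihilator n (fst p) (snd p) (rot n (fst p) (snd p) \<phi> \<alpha>) R"
    using R unfolding ann_set_def by auto
  have Rc: "R \<in> carrier_mat (2 * Nn n) (2 * Nn n)" using ann unfolding is_annihilator_def by auto
  have Rv: "\<forall>A\<in>carrier_mat n n. R *\<^sub>v ve n A = ve n (step n p (\<phi>,\<alpha>) A)"
    using ann unfolding is_annihilator_def step_def rotU_def by auto
  have "\<forall>A\<in>carrier_mat n n. J *\<^sub>v ve n A = ve n (run n ((p,(\<phi>,\<alpha>)) # st') A)"
  proof
    fix A :: "complex mat" assume A: "A \<in> carrier_mat n n"
    have v: "ve n A \<in> carrier_vec (2 * Nn n)" by (rule carrier_vecI) (simp add: dim_ve)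
    have "J *\<^sub>v ve n A = J' *\<^sub>v (R *\<^sub>v ve n A)" unfolding J by (rule assoc_mult_mat_vec[OF J'c Rc v])
    also have "\<dots> = J' *\<^sub>v ve n (step n p (\<phi>,\<alpha>) A)" using Rv A by simp
    also have "\<dots> = ve n (run n st' (step n p (\<phi>,\<alpha>) A))" using st'(3) step_carrier_gen by blast
    finally show "J *\<^sub>v ve n A = ve n (run n ((p,(\<phi>,\<alpha>)) # st') A)" by simp
  qed
  moreover have "J \<in> carrier_mat (2 * Nn n) (2 * Nn n)" unfolding J using J'c Rc by simp
  ultimately show ?case using st' cb
    by (intro conjI exI[of _ "(p,(\<phi>,\<alpha>)) # st'"]) auto
qed



lemma card_offS: "card (offS n) \<le> n * n"
proof -
  have "card (offS n) \<le> card ({..<n} \<times> {..<n})"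
    by (rule card_mono) (auto simp: offS_def)
  then show ?thesis by (simp add: card_cartesian_product)
qed

lemma off_nonneg: "0 \<le> off n A"
  unfolding off_def by (intro sum_nonneg) auto

lemma off_bound:
  assumes "\<forall>s t. s < n \<longrightarrow> t < n \<longrightarrow> s \<noteq> t \<longrightarrow> cmod (F $$ (s,t)) \<le> E"
  shows "off n F \<le> real (n * n) * E\<^sup>2"
proof -
  have "off n F \<le> (\<Sum>p\<in>offS n. E\<^sup>2)"
    unfolding off_def
  proof (rule sum_mono)
    fix p assume "p \<in> offS n"
    then obtain s t where p: "p = (s,t)" "s < n" "t < n" "s \<noteq> t" by (auto simp: offS_def)
    then have "cmod (F $$ p) \<le> E" using assms by auto
    then show "(cmod (F $$ p))\<^sup>2 \<le> E\<^sup>2" by (intro power_mono) auto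
  qed
  also have "\<dots> = real (card (offS n)) * E\<^sup>2" by simp
  also have "\<dots> \<le> real (n * n) * E\<^sup>2"
  proof (rule mult_right_mono)
    show "real (card (offS n)) \<le> real (n * n)" using card_offS[of n] by (simp only: of_nat_le_iff)
  qed simp
  finally show ?thesis .
qed

lemma ordm_valid:
  assumes \<tau>: "\<forall>j\<in>{2..n}. bij_betw (\<tau> j) {1..<j} {1..<j}" and "p \<in> set (ordm \<tau> n)"
  shows "1 \<le> fst p \<and> fst p < snd p \<and> snd p \<le> n"
proof -
  obtain j k where jk: "j \<in> {2..<n+1}" "k \<in> {1..<j}" "p = (\<tau> j k, j)"
    using assms(2) unfolding ordm_def by auto
  have "bij_betw (\<tau> j) {1..<j} {1..<j}" using \<tau> jk by auto
  then have "\<tau> j k \<in> {1..<j}" using jk bij_betwE by blast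
  then show ?thesis using jk by auto
qed

theorem theorem3p2:
  fixes n :: nat and \<nu> :: real
  assumes "n \<ge> 2" and "0 < \<nu>" and "\<nu> \<le> 1"
  shows "\<exists>\<mu>::real. 0 \<le> \<mu> \<and> \<mu> < 1 \<and>
           (\<forall>ord \<in> Cc n. \<forall>J \<in> jacobi_class n \<nu> ord. spec_norm J \<le> \<mu>)"
proof -
  define K where "K = real (n * n) * (Dc \<nu> n)\<^sup>2"
  define \<mu> where "\<mu> = sqrt (K / (1 + K))"
  have K0: "0 \<le> K" unfolding K_def by simp
  have mu0: "0 \<le> \<mu>" unfolding \<mu>_def using K0 by simp
  have mu1: "\<mu> < 1" unfolding \<mu>_def using K0 by simp
  have main: "spec_norm J \<le> \<mu>" if ord: "ord \<in> Cc n" and J: "J \<in> jacobi_class n \<nu> ord" for ord J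
  proof -
    obtain \<tau> where \<tau>: "\<forall>j\<in>{2..n}. bij_betw (\<tau> j) {1..<j} {1..<j}" and ordeq: "ord = ordm \<tau> n"
      using ord unfolding Cc_def ordm_def by auto
    obtain st where Jc: "J \<in> carrier_mat (2 * Nn n) (2 * Nn n)" and st: "map fst st = ord"
      "\<forall>q\<in>set st. \<nu> \<le> \<bar>cos (fst (snd q))\<bar>" "\<forall>A\<in>carrier_mat n n. J *\<^sub>v ve n A = ve n (run n st A)"
      using jc_link[OF J] by blast
    have valid: "\<forall>q\<in>set st. 1 \<le> fst (fst q) \<and> fst (fst q) < snd (fst q) \<and> snd (fst q) \<le> n"
    proof
      fix q assume "q \<in> set st"
      then have "fst q \<in> set (ordm \<tau> n)" using st(1) ordeq by (metis image_eqI set_map)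
      then show "1 \<le> fst (fst q) \<and> fst (fst q) < snd (fst q) \<and> snd (fst q) \<le> n"
        by (rule ordm_valid[OF \<tau>])
    qed
    have bnd: "vnorm2 (J *\<^sub>v x) \<le> \<mu>" if x: "x \<in> carrier_vec (dim_col J)" "vnorm2 x \<le> 1" for x
    proof -
      obtain A where A: "A \<in> carrier_mat n n" and xA: "x = ve n A"
        using ve_surj[of x n] x Jc by auto
      let ?F = "run n st A"
      let ?L = "loss n st A"
      have ent: "\<forall>s t. s < n \<longrightarrow> t < n \<longrightarrow> s \<noteq> t \<longrightarrow> cmod (?F $$ (s,t)) \<le> Dc \<nu> n * sqrt ?L"
        by (rule main_ind[OF assms(2,3) \<tau>]) (use st ordeq A in auto)
      have "off n ?F \<le> real (n * n) * (Dc \<nu> n * sqrt ?L)\<^sup>2" by (rule off_bound[OF ent])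
      also have "\<dots> = K * ?L" unfolding K_def using loss_nonneg[of n st A]
        by (simp add: power_mult_distrib)
      finally have FK: "off n ?F \<le> K * ?L" .
      have FL: "off n ?F + ?L = off n A" by (rule off_run[OF valid A])
      have e1: "K * off n A = K * off n ?F + K * ?L" using FL distrib_left[of K "off n ?F" ?L] by simp
      have e2: "(1 + K) * off n ?F = off n ?F + K * off n ?F" by (simp add: algebra_simps)
      have "(1 + K) * off n ?F \<le> K * off n A" unfolding e1 e2 using FK by linarith
      then have Fmu: "off n ?F \<le> \<mu>\<^sup>2 * off n A"
        unfolding \<mu>_def using K0 by (simp add: field_simps)
      have "vnorm2 (J *\<^sub>v x) = sqrt (off n ?F)" using st(3) A xA by (simp add: vnorm2_ve)
      also have "\<dots> \<le> sqrt (\<mu>\<^sup>2 * off n A)" using Fmu by simp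
      also have "\<dots> = \<mu> * vnorm2 x" using mu0 xA by (simp add: real_sqrt_mult vnorm2_ve)
      also have "\<dots> \<le> \<mu> * 1" using x(2) mu0 by (intro mult_left_mono) auto
      finally show ?thesis by simp
    qed
    show ?thesis unfolding spec_norm_def
    proof (rule cSup_least)
      have "0\<^sub>v (dim_col J) \<in> carrier_vec (dim_col J) \<and> vnorm2 (0\<^sub>v (dim_col J)) \<le> (1::real)"
        by (simp add: vnorm2_def)
      then show "{vnorm2 (J *\<^sub>v x) |x. x \<in> carrier_vec (dim_col J) \<and> vnorm2 x \<le> 1} \<noteq> {}" by blast
    next
      fix y assume "y \<in> {vnorm2 (J *\<^sub>v x) |x. x \<in> carrier_vec (dim_col J) \<and> vnorm2 x \<le> 1}"
      then show "y \<le> \<mu>" using bnd by blast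
    qed
  qed
  show ?thesis using mu0 mu1 main by blast
qed


end
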